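(* The $3$-form $\varphi=e^{127}+e^{347}+e^{567}+e^{135}-e^{146}-e^{236}-e^{245}$ on the Lie algebra $\mathfrak{g}$ described in the context is coclosed ($d\ast\varphi=0$) if and only if $\operatorname{tr}(A)=0$ and $\theta(A)\omega_7+\theta(B)\omega_1+\theta(C)\omega_2=\operatorname{tr}(A_1)\,\omega_7$.
   Context: $\mathfrak{g}$ is a $7$-dimensional Lie algebra with basis $\{e_1,\dots,e_7\}$, dual basis $\{e^i\}$, $e^{ij\dots}=e^i\wedge e^j\wedge\cdots$, bracket given by $A_1=\operatorname{ad}e_7|_{\operatorname{span}\{e_1,e_2\}}=\begin{pmatrix}x&z\\ y&w\end{pmatrix}$, $A=\operatorname{ad}e_7|_{\mathfrak{g}_1}$, $B=\operatorname{ad}e_1|_{\mathfrak{g}_1}$, $C=\operatorname{ad}e_2|_{\mathfrak{g}_1}$, with $\mathfrak{g}_1=\operatorname{span}\{e_3,\dots,e_6\}$ an abelian ideal, $\operatorname{span}\{e_1,e_2\}$ abelian, $\operatorname{span}\{e_7,e_1,e_2\}$ a subalgebra, $\operatorname{tr}B=\operatorname{tr}C=0$, $[A,B]=xB+yC$, $[A,C]=zB+wC$, $[B,C]=0$. $\ast$ is the Hodge star of the metric and orientation induced by $\varphi$ (making $\{e_i\}$ oriented orthonormal). $\omega_7=e^{34}+e^{56}$, $\omega_1=e^{35}-e^{46}$, $\omega_2=-e^{36}-e^{45}$; for $M\in\mathfrak{gl}(\mathfrak{g}_1)$, $\theta(M)\alpha(v_1,\dots,v_k)=-\alpha(Mv_1,\dots,v_k)-\dots-\alpha(v_1,\dots,Mv_k)$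 on $\Lambda^k\mathfrak{g}_1^*$. *)

theory Defs
  imports Complex_Main
begin

text \<open>The Lie algebra g has basis e_1..e_7 (indices 1..7 as naturals).
A k-form is represented by its values on tuples of basis vectors:
a function alpha :: nat list => real, alpha [i1,...,ik] = alpha(e_i1,...,e_ik),
extended multilinearly. Endomorphisms of g1 = span{e_3..e_6} are matrices
M :: nat => nat => real with indices in {3..6}, M e_j = sum_i M i j e_i.\<close>

definition inv_count :: "nat list \<Rightarrow> nat" where
  "inv_count l = card {(i, j). i < j \<and> j < length l \<and> l ! j < l ! i}"

definition levi_civita :: "nat list \<Rightarrow> real" where
  "levi_civita l = (if distinct l \<and> set l = {1..7} then (-1) ^ inv_count l else 0)"

text \<open>Basic form e^{I} = e^{i1} wedge ... wedge e^{ik}, evaluated on basis tuples.\<close>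
definition eform :: "nat list \<Rightarrow> nat list \<Rightarrow> real" where
  "eform I J = (if distinct I \<and> distinct J \<and> set J = set I
                then (-1) ^ (inv_count I + inv_count J) else 0)"

text \<open>Hodge star for the metric making e_1..e_7 oriented orthonormal:
 (*alpha)_J = 1/k! sum_I alpha_I eps_{I J}.\<close>
definition hodge :: "(nat list \<Rightarrow> real) \<Rightarrow> nat list \<Rightarrow> real" where
  "hodge \<alpha> J =
     (\<Sum>I\<in>{I. set I \<subseteq> {1..7} \<and> length I = 7 - length J}. \<alpha> I * levi_civita (I @ J))
       / fact (7 - length J)"

text \<open>Chevalley-Eilenberg differential, c i j k = coefficient of e_k in [e_i,e_j]:
 d alpha(X_0..X_k) = sum_{i<j} (-1)^(i+j) alpha([X_i,X_j], X_0,..^i..^j..,X_k).\<close>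
definition ext_d :: "(nat \<Rightarrow> nat \<Rightarrow> nat \<Rightarrow> real) \<Rightarrow> (nat list \<Rightarrow> real) \<Rightarrow> nat list \<Rightarrow> real" where
  "ext_d c \<alpha> l = (\<Sum>j<length l. \<Sum>i<j. (-1) ^ (i + j) *
      (\<Sum>m\<in>{1..7}. c (l ! i) (l ! j) m * \<alpha> (m # nths l (- {i, j}))))"

text \<open>Half of the brackets: ad e_7 on span{e_1,e_2} is A1 = [[x,z],[y,w]],
 ad e_7, ad e_1, ad e_2 on g1 are A, B, C; all other brackets of basis vectors
 (up to antisymmetry) vanish.\<close>
definition half_br ::
  "real \<Rightarrow> real \<Rightarrow> real \<Rightarrow> real \<Rightarrow> (nat \<Rightarrow> nat \<Rightarrow> real) \<Rightarrow> (nat \<Rightarrow> nat \<Rightarrow> real) \<Rightarrow>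
   (nat \<Rightarrow> nat \<Rightarrow> real) \<Rightarrow> nat \<Rightarrow> nat \<Rightarrow> nat \<Rightarrow> real" where
  "half_br x y z w A B C i j k =
    (if i = 7 \<and> j = 1 then (if k = 1 then x else if k = 2 then y else 0)
     else if i = 7 \<and> j = 2 then (if k = 1 then z else if k = 2 then w else 0)
     else if j \<in> {3..6} \<and> k \<in> {3..6} then
       (if i = 7 then A k j else if i = 1 then B k j else if i = 2 then C k j else 0)
     else 0)"

definition g_bracket ::
  "real \<Rightarrow> real \<Rightarrow> real \<Rightarrow> real \<Rightarrow> (nat \<Rightarrow> nat \<Rightarrow> real) \<Rightarrow> (nat \<Rightarrow> nat \<Rightarrow> real) \<Rightarrow>
   (nat \<Rightarrow> nat \<Rightarrow> real) \<Rightarrow> nat \<Rightarrow> nat \<Rightarrow> nat \<Rightarrow> real" where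
  "g_bracket x y z w A B C i j k = half_br x y z w A B C i j k - half_br x y z w A B C j i k"

definition mtrace :: "(nat \<Rightarrow> nat \<Rightarrow> real) \<Rightarrow> real" where
  "mtrace M = (\<Sum>i\<in>{3..6}. M i i)"

definition mmul :: "(nat \<Rightarrow> nat \<Rightarrow> real) \<Rightarrow> (nat \<Rightarrow> nat \<Rightarrow> real) \<Rightarrow> nat \<Rightarrow> nat \<Rightarrow> real" where
  "mmul M N i j = (\<Sum>k\<in>{3..6}. M i k * N k j)"

definition mcomm :: "(nat \<Rightarrow> nat \<Rightarrow> real) \<Rightarrow> (nat \<Rightarrow> nat \<Rightarrow> real) \<Rightarrow> nat \<Rightarrow> nat \<Rightarrow> real" where
  "mcomm M N i j = mmul M N i j - mmul N M i j"

definition theta :: "(nat \<Rightarrow> nat \<Rightarrow> real) \<Rightarrow> (nat list \<Rightarrow> real) \<Rightarrow> nat list \<Rightarrow> real" where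
  "theta M \<alpha> l = - (\<Sum>p<length l. \<Sum>i\<in>{3..6}. M i (l ! p) * \<alpha> (l[p := i]))"

definition phi :: "nat list \<Rightarrow> real" where
  "phi J = eform [1,2,7] J + eform [3,4,7] J + eform [5,6,7] J + eform [1,3,5] J
         - eform [1,4,6] J - eform [2,3,6] J - eform [2,4,5] J"

definition omega7 :: "nat list \<Rightarrow> real" where
  "omega7 J = eform [3,4] J + eform [5,6] J"

definition omega1 :: "nat list \<Rightarrow> real" where
  "omega1 J = eform [3,5] J - eform [4,6] J"

definition omega2 :: "nat list \<Rightarrow> real" where
  "omega2 J = - eform [3,6] J - eform [4,5] J"

end

theory Submission
  imports Defs
begin


lemma length_filter_card: "length (filter P xs) = card {i. i < length xs \<and> P (xs ! i)}"
  by (metis length_filter_conv_card)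

lemma inv_count_Nil[simp]: "inv_count [] = 0"
  by (simp add: inv_count_def)

lemma inv_count_Cons[simp]: "inv_count (a # l) = length (filter (\<lambda>y. y < a) l) + inv_count l"
proof -
  let ?S = "{(i, j). i < j \<and> j < length (a#l) \<and> (a#l) ! j < (a#l) ! i}"
  let ?S1 = "(\<lambda>j. (0::nat, Suc j)) ` {j. j < length l \<and> l ! j < a}"
  let ?S2 = "(\<lambda>(i,j). (Suc i, Suc j)) ` {(i, j). i < j \<and> j < length l \<and> l ! j < l ! i}"
  have eq: "?S = ?S1 \<union> ?S2"
  proof (rule set_eqI, clarify)
    fix i j
    show "((i,j) \<in> ?S) = ((i,j) \<in> ?S1 \<union> ?S2)"
    proof (cases i)
      case 0 then show ?thesis by (cases j) auto
    next
      case (Suc i') then show ?thesis by (cases j) (auto simp: image_iff)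
    qed
  qed
  have f2: "finite {(i, j). i < j \<and> j < length l \<and> l ! j < l ! i}"
    by (rule finite_subset[of _ "{..<length l} \<times> {..<length l}"]) auto
  have "card ?S = card ?S1 + card ?S2"
    unfolding eq by (rule card_Un_disjoint) (auto intro: f2)
  also have "card ?S1 = card {j. j < length l \<and> l ! j < a}"
    by (rule card_image) (auto simp: inj_on_def)
  also have "card ?S2 = inv_count l"
    unfolding inv_count_def by (rule card_image) (auto simp: inj_on_def)
  finally show ?thesis unfolding inv_count_def by (simp add: length_filter_card)
qed

lemma inv_swap: "(a::nat) < b \<Longrightarrow> inv_count (xs @ b # a # ys) = Suc (inv_count (xs @ a # b # ys))"
proof (induction xs)
  case Nil then show ?case by simp
next
  case (Cons x xs) then show ?case by auto
qed

lemma lc_swap_lt: assumes "(a::nat) < b"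
  shows "levi_civita (xs @ b # a # ys) = - levi_civita (xs @ a # b # ys)"
proof -
  have d: "distinct (xs @ b # a # ys) = distinct (xs @ a # b # ys)" by auto
  have s: "set (xs @ b # a # ys) = set (xs @ a # b # ys)" by auto
  have i: "inv_count (xs @ b # a # ys) = Suc (inv_count (xs @ a # b # ys))" using assms by (rule inv_swap)
  show ?thesis unfolding levi_civita_def d s i by simp
qed

lemma lc_swap: "levi_civita (xs @ a # b # ys) = - levi_civita (xs @ b # a # ys)"
proof -
  consider "a = b" | "a < b" | "b < a" by linarith
  then show ?thesis
  proof cases
    case 1 then show ?thesis by (simp add: levi_civita_def)
  next
    case 2 then show ?thesis using lc_swap_lt[of a b xs ys] by simp
  next
    case 3 then show ?thesis using lc_swap_lt[of b a xs ys] by simp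
  qed
qed

lemma lc_alt: "levi_civita l = (if distinct l \<and> length l = 7 \<and> (\<forall>x\<in>set l. 1 \<le> x \<and> x \<le> 7) then (-1) ^ inv_count l else 0)"
proof -
  have "(distinct l \<and> set l = {1..7}) = (distinct l \<and> length l = 7 \<and> set l \<subseteq> {1..7})"
  proof
    assume "distinct l \<and> set l = {1..7}" then show "distinct l \<and> length l = 7 \<and> set l \<subseteq> {1..7}"
      using distinct_card by fastforce
  next
    assume a: "distinct l \<and> length l = 7 \<and> set l \<subseteq> {1..7}"
    then have "card (set l) = card {1..7::nat}" using distinct_card by fastforce
    then show "distinct l \<and> set l = {1..7}" using a by (simp add: card_subset_eq)
  qed
  then show ?thesis unfolding levi_civita_def by (auto simp: subset_iff)
qed
lemma "levi_civita [3,1,2,4,5,7,6] = -1" by (simp add: lc_alt)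
lemma "eform [1,2,7] [2,7,1] = 1" by (simp add: eform_def set_eq_subset)

lemma lc_sw0: "(b::nat) < a \<Longrightarrow> levi_civita (a # b # ys) = - levi_civita (b # a # ys)"
  using lc_swap[of "[]" a b ys] by simp
lemma lc_sw1: "(b::nat) < a \<Longrightarrow> levi_civita (x # a # b # ys) = - levi_civita (x # b # a # ys)"
  using lc_swap[of "[x]" a b ys] by simp

definition S3 :: "nat list set" where "S3 = {I. set I \<subseteq> {1..7} \<and> length I = 3}"

lemma finite_S3: "finite S3"
  unfolding S3_def by (rule finite_lists_length_eq) simp

lemma perm3: assumes "distinct I" "set I = {p,q,r}" "distinct [p,q,r]"
  shows "I \<in> {[p,q,r],[q,p,r],[p,r,q],[q,r,p],[r,p,q],[r,q,p]}"
proof -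
  have "length I = 3" using assms distinct_card by fastforce
  then obtain i j k where I: "I = [i,j,k]"
    by (auto simp: length_Suc_conv numeral_3_eq_3)
  have m: "i \<in> {p,q,r}" "j \<in> {p,q,r}" "k \<in> {p,q,r}" using assms(2) unfolding I by auto
  have d: "i \<noteq> j" "i \<noteq> k" "j \<noteq> k" using assms(1) unfolding I by auto
  show ?thesis unfolding I using m d by auto
qed

lemma hodge_term:
  assumes "distinct [p,q,r]" "{p,q,r} \<subseteq> {1..7}"
  shows "(\<Sum>I\<in>S3. eform [p,q,r] I * g I) = (\<Sum>I\<in>{[p,q,r],[q,p,r],[p,r,q],[q,r,p],[r,p,q],[r,q,p]}. eform [p,q,r] I * g I)"
proof (rule sum.mono_neutral_right[OF finite_S3])
  show "{[p,q,r],[q,p,r],[p,r,q],[q,r,p],[r,p,q],[r,q,p]} \<subseteq> S3" using assms by (auto simp: S3_def)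
  show "\<forall>i\<in>S3 - {[p,q,r],[q,p,r],[p,r,q],[q,r,p],[r,p,q],[r,q,p]}. eform [p, q, r] i * g i = 0"
  proof
    fix I assume "I \<in> S3 - {[p,q,r],[q,p,r],[p,r,q],[q,r,p],[r,p,q],[r,q,p]}"
    then have "eform [p,q,r] I = 0" using perm3[of I p q r] assms unfolding eform_def by auto
    then show "eform [p, q, r] I * g I = 0" by simp
  qed
qed

lemma hodge_phi: assumes "length L = 4"
  shows "hodge phi L = levi_civita ([1,2,7]@L) + levi_civita ([3,4,7]@L) + levi_civita ([5,6,7]@L)
     + levi_civita ([1,3,5]@L) - levi_civita ([1,4,6]@L) - levi_civita ([2,3,6]@L) - levi_civita ([2,4,5]@L)"
proof -
  have h: "hodge phi L = (\<Sum>I\<in>S3. phi I * levi_civita (I @ L)) / 6"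
    unfolding hodge_def S3_def using assms by (simp add: numeral_3_eq_3 fact_Suc)
  have t: "\<And>p q r. distinct [p,q,r] \<Longrightarrow> {p,q,r} \<subseteq> {1..7} \<Longrightarrow>
     (\<Sum>I\<in>S3. eform [p,q,r] I * levi_civita (I @ L)) = (\<Sum>I\<in>{[p,q,r],[q,p,r],[p,r,q],[q,r,p],[r,p,q],[r,q,p]}. eform [p,q,r] I * levi_civita (I @ L))"
    by (rule hodge_term)
  have k0: "(\<Sum>I\<in>S3. eform [1,2,7] I * levi_civita (I @ L)) = 6 * levi_civita ([1,2,7] @ L)"
    by (subst t) (simp_all add: eform_def lc_sw0 lc_sw1 set_eq_subset)
  have k1: "(\<Sum>I\<in>S3. eform [3,4,7] I * levi_civita (I @ L)) = 6 * levi_civita ([3,4,7] @ L)"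
    by (subst t) (simp_all add: eform_def lc_sw0 lc_sw1 set_eq_subset)
  have k2: "(\<Sum>I\<in>S3. eform [5,6,7] I * levi_civita (I @ L)) = 6 * levi_civita ([5,6,7] @ L)"
    by (subst t) (simp_all add: eform_def lc_sw0 lc_sw1 set_eq_subset)
  have k3: "(\<Sum>I\<in>S3. eform [1,3,5] I * levi_civita (I @ L)) = 6 * levi_civita ([1,3,5] @ L)"
    by (subst t) (simp_all add: eform_def lc_sw0 lc_sw1 set_eq_subset)
  have k4: "(\<Sum>I\<in>S3. eform [1,4,6] I * levi_civita (I @ L)) = 6 * levi_civita ([1,4,6] @ L)"
    by (subst t) (simp_all add: eform_def lc_sw0 lc_sw1 set_eq_subset)
  have k5: "(\<Sum>I\<in>S3. eform [2,3,6] I * levi_civita (I @ L)) = 6 * levi_civita ([2,3,6] @ L)"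
    by (subst t) (simp_all add: eform_def lc_sw0 lc_sw1 set_eq_subset)
  have k6: "(\<Sum>I\<in>S3. eform [2,4,5] I * levi_civita (I @ L)) = 6 * levi_civita ([2,4,5] @ L)"
    by (subst t) (simp_all add: eform_def lc_sw0 lc_sw1 set_eq_subset)
  show ?thesis unfolding h phi_def
    by (simp only: sum.distrib sum_subtractf ring_distribs k0 k1 k2 k3 k4 k5 k6) simp
qed

lemma ext_d5: "ext_d c \<alpha> [a1,a2,a3,a4,a5] = (\<Sum>m\<in>{1..7}.
  - c a1 a2 m * \<alpha> [m,a3,a4,a5] + c a1 a3 m * \<alpha> [m,a2,a4,a5] - c a1 a4 m * \<alpha> [m,a2,a3,a5] + c a1 a5 m * \<alpha> [m,a2,a3,a4]
  - c a2 a3 m * \<alpha> [m,a1,a4,a5] + c a2 a4 m * \<alpha> [m,a1,a3,a5] - c a2 a5 m * \<alpha> [m,a1,a3,a4]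
  - c a3 a4 m * \<alpha> [m,a1,a2,a5] + c a3 a5 m * \<alpha> [m,a1,a2,a4]
  - c a4 a5 m * \<alpha> [m,a1,a2,a3])"
  unfolding ext_d_def
  by (simp add: eval_nat_numeral sum.distrib sum_subtractf sum_negf nths_Cons algebra_simps)

definition psi :: "nat list \<Rightarrow> real" where
  "psi L = levi_civita ([1,2,7]@L) + levi_civita ([3,4,7]@L) + levi_civita ([5,6,7]@L)
     + levi_civita ([1,3,5]@L) - levi_civita ([1,4,6]@L) - levi_civita ([2,3,6]@L) - levi_civita ([2,4,5]@L)"

lemma lc_sw4: "levi_civita (k1 # k2 # k3 # m # p # q # ys) = - levi_civita (k1 # k2 # k3 # m # q # p # ys)"
  using lc_swap[of "[k1,k2,k3,m]" p q ys] by simp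
lemma lc_sw5: "levi_civita (k1 # k2 # k3 # m # p # q # r # ys) = - levi_civita (k1 # k2 # k3 # m # p # r # q # ys)"
  using lc_swap[of "[k1,k2,k3,m,p]" q r ys] by simp

lemma psi_sw1: "psi [m,p,q,r] = - psi [m,q,p,r]"
  unfolding psi_def by (simp add: lc_sw4[of _ _ _ m p q])
lemma psi_sw2: "psi [m,p,q,r] = - psi [m,p,r,q]"
  unfolding psi_def by (simp add: lc_sw5[of _ _ _ m p q r])

lemma extd_hodge: "ext_d c (hodge phi) [a1,a2,a3,a4,a5] = ext_d c psi [a1,a2,a3,a4,a5]"
  unfolding ext_d5 by (simp add: hodge_phi psi_def)

lemma gb_anti: "g_bracket x y z w A B C j i k = - g_bracket x y z w A B C i j k"
  unfolding g_bracket_def by simp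

locale altf =
  fixes c :: "nat \<Rightarrow> nat \<Rightarrow> nat \<Rightarrow> real" and \<alpha> :: "nat list \<Rightarrow> real"
  assumes cA: "\<And>i j m. c j i m = - c i j m"
    and aA1: "\<And>m p q r. \<alpha> [m,p,q,r] = - \<alpha> [m,q,p,r]"
    and aA2: "\<And>m p q r. \<alpha> [m,p,q,r] = - \<alpha> [m,p,r,q]"
begin

lemma sw1: "ext_d c \<alpha> [a2,a1,a3,a4,a5] = - ext_d c \<alpha> [a1,a2,a3,a4,a5]"
  unfolding ext_d5 sum_negf[symmetric]
  by (rule sum.cong[OF refl]) (simp add: cA[of a1 a2] aA1[of _ a2 a1])
lemma sw2: "ext_d c \<alpha> [a1,a3,a2,a4,a5] = - ext_d c \<alpha> [a1,a2,a3,a4,a5]"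
  unfolding ext_d5 sum_negf[symmetric]
  by (rule sum.cong[OF refl]) (simp add: cA[of a2 a3] aA1[of _ a3 a2] aA2[of _ a1 a3 a2])
lemma sw3: "ext_d c \<alpha> [a1,a2,a4,a3,a5] = - ext_d c \<alpha> [a1,a2,a3,a4,a5]"
  unfolding ext_d5 sum_negf[symmetric]
  by (rule sum.cong[OF refl]) (simp add: cA[of a3 a4] aA1[of _ a4 a3] aA2[of _ _ a4 a3])
lemma sw4: "ext_d c \<alpha> [a1,a2,a3,a5,a4] = - ext_d c \<alpha> [a1,a2,a3,a4,a5]"
  unfolding ext_d5 sum_negf[symmetric]
  by (rule sum.cong[OF refl]) (simp add: cA[of a4 a5] aA2[of _ _ a5 a4])
end

lemma sortred:
  fixes f :: "nat list \<Rightarrow> real"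
  assumes s1: "\<And>a b c d e. f [b,a,c,d,e] = - f [a,b,c,d,e]"
    and s2: "\<And>a b c d e. f [a,c,b,d,e] = - f [a,b,c,d,e]"
    and s3: "\<And>a b c d e. f [a,b,d,c,e] = - f [a,b,c,d,e]"
    and s4: "\<And>a b c d e. f [a,b,c,e,d] = - f [a,b,c,d,e]"
    and srt: "\<forall>e<8. \<forall>d<e. \<forall>c<d. \<forall>b<c. \<forall>a<b. 0 < a \<longrightarrow> f [a,b,c,d,e] = 0"
  shows "\<forall>a b c d e. a \<in> {1..7} \<and> b \<in> {1..7} \<and> c \<in> {1..7} \<and> d \<in> {1..7} \<and> e \<in> {1..7} \<longrightarrow> f [a,b,c,d,e] = 0"
proof -
  have "\<And>a b c d e. 200 - (a + 2*b + 3*c + 4*d + 5*e) = N \<Longrightarrow> a \<in> {1..7} \<Longrightarrow> b \<in> {1..7} \<Longrightarrow> c \<in> {1..7} \<Longrightarrow> d \<in> {1..7} \<Longrightarrow> e \<in> {1..7} \<Longrightarrow> f [a,b,c,d,e] = 0" for N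
  proof (induction N rule: less_induct)
    case (less N)
    fix a b c d e
    assume N: "200 - (a + 2*b + 3*c + 4*d + 5*e) = N" and r: "a \<in> {1..7}" "b \<in> {1..7}" "c \<in> {1..7}" "d \<in> {1..7}" "e \<in> {1..7}"
    consider "a < b \<and> b < c \<and> c < d \<and> d < e" | "a = b" | "b < a" | "b = c" | "c < b" | "c = d" | "d < c" | "d = e" | "e < d"
      by linarith
    then show "f [a,b,c,d,e] = 0"
    proof cases
      case 1 then show ?thesis using srt r by force
    next
      case 2 then show ?thesis using s1[of a a c d e] by simp
    next
      case 3 then show ?thesis using s1[of a b c d e] less.IH[OF _ refl, of b a c d e] N r by auto
    next
      case 4 then show ?thesis using s2[of a b b d e] by simp
    next
      case 5 then show ?thesis using s2[of a b c d e] less.IH[OF _ refl, of a c b d e] N r by auto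
    next
      case 6 then show ?thesis using s3[of a b c c e] by simp
    next
      case 7 then show ?thesis using s3[of a b c d e] less.IH[OF _ refl, of a b d c e] N r by auto
    next
      case 8 then show ?thesis using s4[of a b c d d] by simp
    next
      case 9 then show ?thesis using s4[of a b c d e] less.IH[OF _ refl, of a b c e d] N r by auto
    qed
  qed
  then show ?thesis by blast
qed

lemma sum17: "(\<Sum>m\<in>{1..7::nat}. g m) = g 1 + g 2 + g 3 + g 4 + g 5 + g 6 + (g 7::real)"
proof -
  have "{1..7::nat} = {1,2,3,4,5,6,7}" by auto
  then show ?thesis by (simp add: algebra_simps)
qed

lemma set36: "{3..6::nat} = {3,4,5,6}" by auto
lemma sum36: "(\<Sum>i\<in>{3..6::nat}. g i) = g 3 + g 4 + g 5 + (g 6::real)"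
  by (simp add: set36)
lemma val0: "ext_d (g_bracket x y z w A B C) psi [1,2,3,4,5] = 0"
  unfolding ext_d5 sum17 by (simp add: psi_def lc_alt g_bracket_def half_br_def)

lemma val1: "ext_d (g_bracket x y z w A B C) psi [1,2,3,4,6] = 0"
  unfolding ext_d5 sum17 by (simp add: psi_def lc_alt g_bracket_def half_br_def)

lemma val2: "ext_d (g_bracket x y z w A B C) psi [1,2,3,4,7] = 0 - w - x - A 3 3 - A 4 4 - B 5 4 - B 6 3 - C 5 3 + C 6 4"
  unfolding ext_d5 sum17 by (simp add: psi_def lc_alt g_bracket_def half_br_def)

lemma val3: "ext_d (g_bracket x y z w A B C) psi [1,2,3,5,6] = 0"
  unfolding ext_d5 sum17 by (simp add: psi_def lc_alt g_bracket_def half_br_def)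

lemma val4: "ext_d (g_bracket x y z w A B C) psi [1,2,3,5,7] = 0 - A 4 5 + A 6 3 - B 3 3 - B 5 5 + C 4 3 + C 6 5"
  unfolding ext_d5 sum17 by (simp add: psi_def lc_alt g_bracket_def half_br_def)

lemma val5: "ext_d (g_bracket x y z w A B C) psi [1,2,3,6,7] = 0 - A 4 6 - A 5 3 + B 4 3 - B 5 6 + C 3 3 + C 6 6"
  unfolding ext_d5 sum17 by (simp add: psi_def lc_alt g_bracket_def half_br_def)

lemma val6: "ext_d (g_bracket x y z w A B C) psi [1,2,4,5,6] = 0"
  unfolding ext_d5 sum17 by (simp add: psi_def lc_alt g_bracket_def half_br_def)

lemma val7: "ext_d (g_bracket x y z w A B C) psi [1,2,4,5,7] = 0 + A 3 5 + A 6 4 - B 3 4 + B 6 5 + C 4 4 + C 5 5"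
  unfolding ext_d5 sum17 by (simp add: psi_def lc_alt g_bracket_def half_br_def)

lemma val8: "ext_d (g_bracket x y z w A B C) psi [1,2,4,6,7] = 0 + A 3 6 - A 5 4 + B 4 4 + B 6 6 + C 3 4 + C 5 6"
  unfolding ext_d5 sum17 by (simp add: psi_def lc_alt g_bracket_def half_br_def)

lemma val9: "ext_d (g_bracket x y z w A B C) psi [1,2,5,6,7] = 0 - w - x - A 5 5 - A 6 6 + B 3 6 + B 4 5 + C 3 5 - C 4 6"
  unfolding ext_d5 sum17 by (simp add: psi_def lc_alt g_bracket_def half_br_def)

lemma val10: "ext_d (g_bracket x y z w A B C) psi [1,3,4,5,6] = 0 - B 3 3 - B 4 4 - B 5 5 - B 6 6"
  unfolding ext_d5 sum17 by (simp add: psi_def lc_alt g_bracket_def half_br_def)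

lemma val11: "ext_d (g_bracket x y z w A B C) psi [1,3,4,5,7] = 0"
  unfolding ext_d5 sum17 by (simp add: psi_def lc_alt g_bracket_def half_br_def)

lemma val12: "ext_d (g_bracket x y z w A B C) psi [1,3,4,6,7] = 0"
  unfolding ext_d5 sum17 by (simp add: psi_def lc_alt g_bracket_def half_br_def)

lemma val13: "ext_d (g_bracket x y z w A B C) psi [1,3,5,6,7] = 0"
  unfolding ext_d5 sum17 by (simp add: psi_def lc_alt g_bracket_def half_br_def)

lemma val14: "ext_d (g_bracket x y z w A B C) psi [1,4,5,6,7] = 0"
  unfolding ext_d5 sum17 by (simp add: psi_def lc_alt g_bracket_def half_br_def)

lemma val15: "ext_d (g_bracket x y z w A B C) psi [2,3,4,5,6] = 0 - C 3 3 - C 4 4 - C 5 5 - C 6 6"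
  unfolding ext_d5 sum17 by (simp add: psi_def lc_alt g_bracket_def half_br_def)

lemma val16: "ext_d (g_bracket x y z w A B C) psi [2,3,4,5,7] = 0"
  unfolding ext_d5 sum17 by (simp add: psi_def lc_alt g_bracket_def half_br_def)

lemma val17: "ext_d (g_bracket x y z w A B C) psi [2,3,4,6,7] = 0"
  unfolding ext_d5 sum17 by (simp add: psi_def lc_alt g_bracket_def half_br_def)

lemma val18: "ext_d (g_bracket x y z w A B C) psi [2,3,5,6,7] = 0"
  unfolding ext_d5 sum17 by (simp add: psi_def lc_alt g_bracket_def half_br_def)

lemma val19: "ext_d (g_bracket x y z w A B C) psi [2,4,5,6,7] = 0"
  unfolding ext_d5 sum17 by (simp add: psi_def lc_alt g_bracket_def half_br_def)

lemma val20: "ext_d (g_bracket x y z w A B C) psi [3,4,5,6,7] = 0 - A 3 3 - A 4 4 - A 5 5 - A 6 6"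
  unfolding ext_d5 sum17 by (simp add: psi_def lc_alt g_bracket_def half_br_def)
lemma th0: "theta A omega7 [3,3] + theta B omega1 [3,3] + theta C omega2 [3,3] - (x + w) * omega7 [3,3] = 0"
  by (simp add: theta_def omega7_def omega1_def omega2_def eform_def set_eq_subset sum36 numeral_eq_Suc lessThan_Suc)

lemma th1: "theta A omega7 [3,4] + theta B omega1 [3,4] + theta C omega2 [3,4] - (x + w) * omega7 [3,4] = 0 - w - x - A 3 3 - A 4 4 - B 5 4 - B 6 3 - C 5 3 + C 6 4"
  by (simp add: theta_def omega7_def omega1_def omega2_def eform_def set_eq_subset sum36 numeral_eq_Suc lessThan_Suc)

lemma th2: "theta A omega7 [3,5] + theta B omega1 [3,5] + theta C omega2 [3,5] - (x + w) * omega7 [3,5] = 0 - A 4 5 + A 6 3 - B 3 3 - B 5 5 + C 4 3 + C 6 5"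
  by (simp add: theta_def omega7_def omega1_def omega2_def eform_def set_eq_subset sum36 numeral_eq_Suc lessThan_Suc)

lemma th3: "theta A omega7 [3,6] + theta B omega1 [3,6] + theta C omega2 [3,6] - (x + w) * omega7 [3,6] = 0 - A 4 6 - A 5 3 + B 4 3 - B 5 6 + C 3 3 + C 6 6"
  by (simp add: theta_def omega7_def omega1_def omega2_def eform_def set_eq_subset sum36 numeral_eq_Suc lessThan_Suc)

lemma th4: "theta A omega7 [4,3] + theta B omega1 [4,3] + theta C omega2 [4,3] - (x + w) * omega7 [4,3] = 0 + w + x + A 3 3 + A 4 4 + B 5 4 + B 6 3 + C 5 3 - C 6 4"
  by (simp add: theta_def omega7_def omega1_def omega2_def eform_def set_eq_subset sum36 numeral_eq_Suc lessThan_Suc)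

lemma th5: "theta A omega7 [4,4] + theta B omega1 [4,4] + theta C omega2 [4,4] - (x + w) * omega7 [4,4] = 0"
  by (simp add: theta_def omega7_def omega1_def omega2_def eform_def set_eq_subset sum36 numeral_eq_Suc lessThan_Suc)

lemma th6: "theta A omega7 [4,5] + theta B omega1 [4,5] + theta C omega2 [4,5] - (x + w) * omega7 [4,5] = 0 + A 3 5 + A 6 4 - B 3 4 + B 6 5 + C 4 4 + C 5 5"
  by (simp add: theta_def omega7_def omega1_def omega2_def eform_def set_eq_subset sum36 numeral_eq_Suc lessThan_Suc)

lemma th7: "theta A omega7 [4,6] + theta B omega1 [4,6] + theta C omega2 [4,6] - (x + w) * omega7 [4,6] = 0 + A 3 6 - A 5 4 + B 4 4 + B 6 6 + C 3 4 + C 5 6"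
  by (simp add: theta_def omega7_def omega1_def omega2_def eform_def set_eq_subset sum36 numeral_eq_Suc lessThan_Suc)

lemma th8: "theta A omega7 [5,3] + theta B omega1 [5,3] + theta C omega2 [5,3] - (x + w) * omega7 [5,3] = 0 + A 4 5 - A 6 3 + B 3 3 + B 5 5 - C 4 3 - C 6 5"
  by (simp add: theta_def omega7_def omega1_def omega2_def eform_def set_eq_subset sum36 numeral_eq_Suc lessThan_Suc)

lemma th9: "theta A omega7 [5,4] + theta B omega1 [5,4] + theta C omega2 [5,4] - (x + w) * omega7 [5,4] = 0 - A 3 5 - A 6 4 + B 3 4 - B 6 5 - C 4 4 - C 5 5"
  by (simp add: theta_def omega7_def omega1_def omega2_def eform_def set_eq_subset sum36 numeral_eq_Suc lessThan_Suc)

lemma th10: "theta A omega7 [5,5] + theta B omega1 [5,5] + theta C omega2 [5,5] - (x + w) * omega7 [5,5] = 0"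
  by (simp add: theta_def omega7_def omega1_def omega2_def eform_def set_eq_subset sum36 numeral_eq_Suc lessThan_Suc)

lemma th11: "theta A omega7 [5,6] + theta B omega1 [5,6] + theta C omega2 [5,6] - (x + w) * omega7 [5,6] = 0 - w - x - A 5 5 - A 6 6 + B 3 6 + B 4 5 + C 3 5 - C 4 6"
  by (simp add: theta_def omega7_def omega1_def omega2_def eform_def set_eq_subset sum36 numeral_eq_Suc lessThan_Suc)

lemma th12: "theta A omega7 [6,3] + theta B omega1 [6,3] + theta C omega2 [6,3] - (x + w) * omega7 [6,3] = 0 + A 4 6 + A 5 3 - B 4 3 + B 5 6 - C 3 3 - C 6 6"
  by (simp add: theta_def omega7_def omega1_def omega2_def eform_def set_eq_subset sum36 numeral_eq_Suc lessThan_Suc)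

lemma th13: "theta A omega7 [6,4] + theta B omega1 [6,4] + theta C omega2 [6,4] - (x + w) * omega7 [6,4] = 0 - A 3 6 + A 5 4 - B 4 4 - B 6 6 - C 3 4 - C 5 6"
  by (simp add: theta_def omega7_def omega1_def omega2_def eform_def set_eq_subset sum36 numeral_eq_Suc lessThan_Suc)

lemma th14: "theta A omega7 [6,5] + theta B omega1 [6,5] + theta C omega2 [6,5] - (x + w) * omega7 [6,5] = 0 + w + x + A 5 5 + A 6 6 - B 3 6 - B 4 5 - C 3 5 + C 4 6"
  by (simp add: theta_def omega7_def omega1_def omega2_def eform_def set_eq_subset sum36 numeral_eq_Suc lessThan_Suc)

lemma th15: "theta A omega7 [6,6] + theta B omega1 [6,6] + theta C omega2 [6,6] - (x + w) * omega7 [6,6] = 0"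
  by (simp add: theta_def omega7_def omega1_def omega2_def eform_def set_eq_subset sum36 numeral_eq_Suc lessThan_Suc)

theorem corollary2p6:
  fixes x y z w :: real and A B C :: "nat \<Rightarrow> nat \<Rightarrow> real"
  assumes trB: "mtrace B = 0" and trC: "mtrace C = 0"
    and AB: "\<forall>i\<in>{3..6}. \<forall>j\<in>{3..6}. mcomm A B i j = x * B i j + y * C i j"
    and AC: "\<forall>i\<in>{3..6}. \<forall>j\<in>{3..6}. mcomm A C i j = z * B i j + w * C i j"
    and BC: "\<forall>i\<in>{3..6}. \<forall>j\<in>{3..6}. mcomm B C i j = 0"
  shows "(\<forall>J. set J \<subseteq> {1..7} \<and> length J = 5 \<longrightarrow>
            ext_d (g_bracket x y z w A B C) (hodge phi) J = 0)
         \<longleftrightarrow>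
         (mtrace A = 0 \<and>
          (\<forall>a\<in>{3..6}. \<forall>b\<in>{3..6}.
             theta A omega7 [a, b] + theta B omega1 [a, b] + theta C omega2 [a, b]
               = (x + w) * omega7 [a, b]))"
proof -
  let ?c = "g_bracket x y z w A B C"
  let ?f = "ext_d ?c psi"
  interpret altf ?c psi
    by unfold_locales (rule gb_anti, rule psi_sw1, rule psi_sw2)
  have L1: "(\<forall>J. set J \<subseteq> {1..7} \<and> length J = 5 \<longrightarrow> ext_d ?c (hodge phi) J = 0) \<longleftrightarrow>
     (\<forall>a b c d e. a \<in> {1..7} \<and> b \<in> {1..7} \<and> c \<in> {1..7} \<and> d \<in> {1..7} \<and> e \<in> {1..7} \<longrightarrow> ?f [a,b,c,d,e] = 0)"
  proof
    assume H: "\<forall>J. set J \<subseteq> {1..7} \<and> length J = 5 \<longrightarrow> ext_d ?c (hodge phi) J = 0"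
    show "\<forall>a b c d e. a \<in> {1..7} \<and> b \<in> {1..7} \<and> c \<in> {1..7} \<and> d \<in> {1..7} \<and> e \<in> {1..7} \<longrightarrow> ?f [a,b,c,d,e] = 0"
    proof (intro allI impI)
      fix a b c d e :: nat assume "a \<in> {1..7} \<and> b \<in> {1..7} \<and> c \<in> {1..7} \<and> d \<in> {1..7} \<and> e \<in> {1..7}"
      then have "ext_d ?c (hodge phi) [a,b,c,d,e] = 0" using H[rule_format, of "[a,b,c,d,e]"] by simp
      then show "?f [a,b,c,d,e] = 0" by (simp only: extd_hodge)
    qed
  next
    assume H: "\<forall>a b c d e. a \<in> {1..7} \<and> b \<in> {1..7} \<and> c \<in> {1..7} \<and> d \<in> {1..7} \<and> e \<in> {1..7} \<longrightarrow> ?f [a,b,c,d,e] = 0"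
    show "\<forall>J. set J \<subseteq> {1..7} \<and> length J = 5 \<longrightarrow> ext_d ?c (hodge phi) J = 0"
    proof (intro allI impI)
      fix J :: "nat list" assume J: "set J \<subseteq> {1..7} \<and> length J = 5"
      then obtain a b c d e where Je: "J = [a,b,c,d,e]"
        by (auto simp: length_Suc_conv numeral_eq_Suc)
      show "ext_d ?c (hodge phi) J = 0" using J H unfolding Je extd_hodge by simp
    qed
  qed
  have L2: "(\<forall>a b c d e. a \<in> {1..7} \<and> b \<in> {1..7} \<and> c \<in> {1..7} \<and> d \<in> {1..7} \<and> e \<in> {1..7} \<longrightarrow> ?f [a,b,c,d,e] = 0) \<longleftrightarrow>
     (ext_d (g_bracket x y z w A B C) psi [1,2,3,4,5] = 0 \<and> ext_d (g_bracket x y z w A B C) psi [1,2,3,4,6] = 0 \<and> ext_d (g_bracket x y z w A B C) psi [1,2,3,4,7] = 0 \<and> ext_d (g_bracket x y z w A B C) psi [1,2,3,5,6] = 0 \<and> ext_d (g_bracket x y z w A B C) psi [1,2,3,5,7] = 0 \<and> ext_d (g_bracket x y z w A B C) psi [1,2,3,6,7] = 0 \<and> ext_d (g_bracket x y z w A B C) psi [1,2,4,5,6] = 0 \<and> ext_d (g_bracket x y z w A B C) psi [1,2,4,5,7] = 0 \<and> ext_d (g_bracket x y z w A B C) psi [1,2,4,6,7] = 0 \<and> ext_d (g_bracket x y z w A B C) psi [1,2,5,6,7] = 0 \<and> ext_d (g_bracket x y z w A B C) psi [1,3,4,5,6] = 0 \<and> ext_d (g_bracket x y z w A B C) psi [1,3,4,5,7]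 = 0 \<and> ext_d (g_bracket x y z w A B C) psi [1,3,4,6,7] = 0 \<and> ext_d (g_bracket x y z w A B C) psi [1,3,5,6,7] = 0 \<and> ext_d (g_bracket x y z w A B C) psi [1,4,5,6,7] = 0 \<and> ext_d (g_bracket x y z w A B C) psi [2,3,4,5,6] = 0 \<and> ext_d (g_bracket x y z w A B C) psi [2,3,4,5,7] = 0 \<and> ext_d (g_bracket x y z w A B C) psi [2,3,4,6,7] = 0 \<and> ext_d (g_bracket x y z w A B C) psi [2,3,5,6,7] = 0 \<and> ext_d (g_bracket x y z w A B C) psi [2,4,5,6,7] = 0 \<and> ext_d (g_bracket x y z w A B C) psi [3,4,5,6,7] = 0)"
  proof
    assume "\<forall>a b c d e. a \<in> {1..7} \<and> b \<in> {1..7} \<and> c \<in> {1..7} \<and> d \<in> {1..7} \<and> e \<in> {1..7} \<longrightarrow> ?f [a,b,c,d,e] = 0"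
    then show "ext_d (g_bracket x y z w A B C) psi [1,2,3,4,5] = 0 \<and> ext_d (g_bracket x y z w A B C) psi [1,2,3,4,6] = 0 \<and> ext_d (g_bracket x y z w A B C) psi [1,2,3,4,7] = 0 \<and> ext_d (g_bracket x y z w A B C) psi [1,2,3,5,6] = 0 \<and> ext_d (g_bracket x y z w A B C) psi [1,2,3,5,7] = 0 \<and> ext_d (g_bracket x y z w A B C) psi [1,2,3,6,7] = 0 \<and> ext_d (g_bracket x y z w A B C) psi [1,2,4,5,6] = 0 \<and> ext_d (g_bracket x y z w A B C) psi [1,2,4,5,7] = 0 \<and> ext_d (g_bracket x y z w A B C) psi [1,2,4,6,7] = 0 \<and> ext_d (g_bracket x y z w A B C) psi [1,2,5,6,7] = 0 \<and> ext_d (g_bracket x y z w A B C) psi [1,3,4,5,6] = 0 \<and> ext_d (g_bracket x y z w A B C) psi [1,3,4,5,7] = 0 \<and> ext_d (g_bracket x y z w A B C) psi [1,3,4,6,7] = 0 \<and> ext_d (g_bracket x y z w A B C) psi [1,3,5,6,7] = 0 \<and> ext_d (g_bracket x y z w A B C) psi [1,4,5,6,7] = 0 \<and> ext_d (g_bracket x y z w A B C) psi [2,3,4,5,6] = 0 \<and> ext_d (g_bracket x y z w A B C) psi [2,3,4,5,7] = 0 \<and> ext_d (g_bracket x y z w A B C) psi [2,3,4,6,7] = 0 \<and> ext_d (g_bracket x y z w A B C) psi [2,3,5,6,7] = 0 \<and> ext_d (g_bracket x y z w A B C) psi [2,4,5,6,7] = 0 \<and> ext_d (g_bracket x y z w A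 B C) psi [3,4,5,6,7] = 0" by simp
  next
    assume H: "ext_d (g_bracket x y z w A B C) psi [1,2,3,4,5] = 0 \<and> ext_d (g_bracket x y z w A B C) psi [1,2,3,4,6] = 0 \<and> ext_d (g_bracket x y z w A B C) psi [1,2,3,4,7] = 0 \<and> ext_d (g_bracket x y z w A B C) psi [1,2,3,5,6] = 0 \<and> ext_d (g_bracket x y z w A B C) psi [1,2,3,5,7] = 0 \<and> ext_d (g_bracket x y z w A B C) psi [1,2,3,6,7] = 0 \<and> ext_d (g_bracket x y z w A B C) psi [1,2,4,5,6] = 0 \<and> ext_d (g_bracket x y z w A B C) psi [1,2,4,5,7] = 0 \<and> ext_d (g_bracket x y z w A B C) psi [1,2,4,6,7] = 0 \<and> ext_d (g_bracket x y z w A B C) psi [1,2,5,6,7] = 0 \<and> ext_d (g_bracket x y z w A B C) psi [1,3,4,5,6] = 0 \<and> ext_d (g_bracket x y z w A B C) psi [1,3,4,5,7] = 0 \<and> ext_d (g_bracket x y z w A B C) psi [1,3,4,6,7] = 0 \<and> ext_d (g_bracket x y z w A B C) psi [1,3,5,6,7] = 0 \<and> ext_d (g_bracket x y z w A B C) psi [1,4,5,6,7] = 0 \<and> ext_d (g_bracket x y z w A B C) psi [2,3,4,5,6] = 0 \<and> ext_d (g_bracket x y z w A B C) psi [2,3,4,5,7] = 0 \<and> ext_d (g_bracket x y z w A B C) psi [2,3,4,6,7] = 0 \<and> ext_d (g_bracket x y z w A B C) psi [2,3,5,6,7] = 0 \<and> ext_d (g_bracket x y z w A B C) psi [2,4,5,6,7]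 = 0 \<and> ext_d (g_bracket x y z w A B C) psi [3,4,5,6,7] = 0"
    show "\<forall>a b c d e. a \<in> {1..7} \<and> b \<in> {1..7} \<and> c \<in> {1..7} \<and> d \<in> {1..7} \<and> e \<in> {1..7} \<longrightarrow> ?f [a,b,c,d,e] = 0"
    proof (rule sortred)
      show "\<forall>e<8. \<forall>d<e. \<forall>c<d. \<forall>b<c. \<forall>a<b. 0 < a \<longrightarrow> ?f [a,b,c,d,e] = 0"
        using H by (simp add: numeral_eq_Suc All_less_Suc)
    qed (rule sw1, rule sw2, rule sw3, rule sw4)
  qed
  have L3: "(\<forall>a\<in>{3..6}. \<forall>b\<in>{3..6}.
             theta A omega7 [a, b] + theta B omega1 [a, b] + theta C omega2 [a, b]
               = (x + w) * omega7 [a, b]) \<longleftrightarrow> (theta A omega7 [3,3] + theta B omega1 [3,3] + theta C omega2 [3,3] = (x + w) * omega7 [3,3] \<and> theta A omega7 [3,4] + theta B omega1 [3,4] + theta C omega2 [3,4] = (x + w) * omega7 [3,4] \<and> theta A omega7 [3,5] + theta B omega1 [3,5] + theta C omega2 [3,5] = (x + w) * omega7 [3,5] \<and> theta A omega7 [3,6] + theta B omega1 [3,6] + theta C omega2 [3,6] = (x + w) * omega7 [3,6] \<and> theta A omega7 [4,3] + theta B omega1 [4,3] + theta C omega2 [4,3] = (x + w) * omega7 [4,3] \<and> theta A omega7 [4,4] + theta B omega1 [4,4] + theta C omega2 [4,4] = (x + w) * omega7 [4,4] \<and> theta A omega7 [4,5] + theta B omega1 [4,5] + theta C omega2 [4,5]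 = (x + w) * omega7 [4,5] \<and> theta A omega7 [4,6] + theta B omega1 [4,6] + theta C omega2 [4,6] = (x + w) * omega7 [4,6] \<and> theta A omega7 [5,3] + theta B omega1 [5,3] + theta C omega2 [5,3] = (x + w) * omega7 [5,3] \<and> theta A omega7 [5,4] + theta B omega1 [5,4] + theta C omega2 [5,4] = (x + w) * omega7 [5,4] \<and> theta A omega7 [5,5] + theta B omega1 [5,5] + theta C omega2 [5,5] = (x + w) * omega7 [5,5] \<and> theta A omega7 [5,6] + theta B omega1 [5,6] + theta C omega2 [5,6] = (x + w) * omega7 [5,6] \<and> theta A omega7 [6,3] + theta B omega1 [6,3] + theta C omega2 [6,3] = (x + w) * omega7 [6,3] \<and> theta A omega7 [6,4] + theta B omega1 [6,4] + theta C omega2 [6,4] = (x + w) * omega7 [6,4] \<and> theta A omega7 [6,5] + theta B omega1 [6,5] + theta C omega2 [6,5] = (x + w) * omega7 [6,5] \<and> theta A omega7 [6,6] + theta B omega1 [6,6] + theta C omega2 [6,6] = (x + w) * omega7 [6,6])"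
    by (simp add: set36)
  have E: "\<And>a b. theta A omega7 [a, b] + theta B omega1 [a, b] + theta C omega2 [a, b] = (x + w) * omega7 [a, b]
     \<longleftrightarrow> theta A omega7 [a, b] + theta B omega1 [a, b] + theta C omega2 [a, b] - (x + w) * omega7 [a, b] = 0"
    by linarith
  have tB: "B 3 3 + B 4 4 + B 5 5 + B 6 6 = 0" using trB by (simp add: mtrace_def sum36)
  have tC: "C 3 3 + C 4 4 + C 5 5 + C 6 6 = 0" using trC by (simp add: mtrace_def sum36)
  have tA: "mtrace A = A 3 3 + A 4 4 + A 5 5 + A 6 6" by (simp add: mtrace_def sum36)
  show ?thesis
    unfolding L1 L2 L3 unfolding E val0 val1 val2 val3 val4 val5 val6 val7 val8 val9 val10 val11 val12 val13 val14 val15 val16 val17 val18 val19 val20 th0 th1 th2 th3 th4 th5 th6 th7 th8 th9 th10 th11 th12 th13 th14 th15 tA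
    using tB tC
    by (intro iffI; (elim conjE)?; (intro conjI)?; linarith)
qed

end
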